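(* Let $r_0>0$ be such that for every $0\le r\le r_0$ and every $\beta\ge0$ one has $\int_0^\beta (r^2+2\sin^2y)^{1/2}\bigl(\frac34-\sin^2y\bigr)dy\ge0$. For $r>0$ and $w,z\in\mathbb R$ define \begin{align*} G_0(r,w)&=\int_0^w\Bigl(1+\frac{2\sin^2(ry)}{r^2}\Bigr)^{1/2}\frac{2\sin^2(ry)}{r^2}\,dy,\\ G_1(r,z)&=\frac32\int_0^z G_0(r,w)\Bigl(1+\frac{2\sin^2(rw)}{r^2}\Bigr)^{1/2}dw,\\ G_2(r,w)&=\int_0^w\Bigl(1+\frac{2\sin^2(ry)}{r^2}\Bigr)^{1/2}dy. \end{align*} Then for every $0<r\le r_0$ and every $z\in\mathbb R$, \[ |G_1(r,z)|\le\frac94\cdot\frac12\cdot\frac{\bigl(G_2(r,z)\bigr)^2}{r^2}. \] *)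

theory Defs
  imports "HOL-Analysis.Analysis"
begin

text \<open>Oriented integrals \<open>\<integral>_0^w\<close> are rendered with the interval Lebesgue integral
  \<open>LBINT y=0..w\<close>, which equals minus the integral over [w,0] when w < 0.\<close>

definition G0 :: "real \<Rightarrow> real \<Rightarrow> real" where
  "G0 r w = (LBINT y=0..w. sqrt (1 + 2 * (sin (r * y))^2 / r^2) * (2 * (sin (r * y))^2 / r^2))"

definition G1 :: "real \<Rightarrow> real \<Rightarrow> real" where
  "G1 r z = 3/2 * (LBINT w=0..z. G0 r w * sqrt (1 + 2 * (sin (r * w))^2 / r^2))"

definition G2 :: "real \<Rightarrow> real \<Rightarrow> real" where
  "G2 r w = (LBINT y=0..w. sqrt (1 + 2 * (sin (r * y))^2 / r^2))"

end

theory Submission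
  imports Defs
begin

lemma prim_deriv:
  fixes f :: "real \<Rightarrow> real"
  assumes "continuous_on UNIV f"
  shows "DERIV (\<lambda>u. LBINT y=0..u. f y) x :> f x"
proof -
  define a where "a = -\<bar>x\<bar> - 1"
  define b where "b = \<bar>x\<bar> + 1"
  have "((\<lambda>u. LBINT y=0..u. f y) has_vector_derivative (f x)) (at x within {a..b})"
    using interval_integral_FTC2[of a 0 b f x] continuous_on_subset[OF assms, of "{a..b}"]
    by (auto simp: a_def b_def zero_ereal_def[symmetric])
  moreover have "at x within {a..b} = at x"
    by (rule at_within_interior) (auto simp: a_def b_def)
  ultimately show ?thesis
    by (simp add: has_real_derivative_iff_has_vector_derivative)
qed

lemma odd_prim:
  fixes F g :: "real \<Rightarrow> real"
  assumes d: "\<And>x. DERIV F x :> g x" and e: "\<And>x. g (-x) = g x" and z: "F 0 = 0"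
  shows "F (-x) = - F x"
proof -
  have "\<forall>x. DERIV (\<lambda>x. F (-x) + F x) x :> 0"
  proof
    fix x
    have "DERIV (\<lambda>x. F (-x)) x :> g (-x) * (-1)"
      by (rule DERIV_chain2[OF d]) (auto intro!: derivative_eq_intros)
    from DERIV_add[OF this d[of x]] show "DERIV (\<lambda>x. F (-x) + F x) x :> 0"
      using e[of x] by simp
  qed
  from DERIV_isconst_all[OF this, of x 0] z show ?thesis by simp
qed

lemma even_prim:
  fixes F g :: "real \<Rightarrow> real"
  assumes d: "\<And>x. DERIV F x :> g x" and e: "\<And>x. g (-x) = - g x"
  shows "F (-x) = F x"
proof -
  have "\<forall>x. DERIV (\<lambda>x. F (-x) - F x) x :> 0"
  proof
    fix x
    have "DERIV (\<lambda>x. F (-x)) x :> g (-x) * (-1)"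
      by (rule DERIV_chain2[OF d]) (auto intro!: derivative_eq_intros)
    from DERIV_diff[OF this d[of x]] show "DERIV (\<lambda>x. F (-x) - F x) x :> 0"
      using e[of x] by simp
  qed
  from DERIV_isconst_all[OF this, of x 0] show ?thesis by simp
qed


lemma main:
  fixes r :: real
  assumes rpos: "0 < r"
    and hyp: "\<forall>\<beta>\<ge>0. (LBINT y=0..\<beta>. sqrt (r^2 + 2 * (sin y)^2) * (3/4 - (sin y)^2)) \<ge> 0"
  shows "\<bar>G1 r z\<bar> \<le> 9/4 * (1/2) * (G2 r z)^2 / r^2"
proof -
  define f where "f y = sqrt (1 + 2 * (sin (r * y))^2 / r^2)" for y
  define g where "g y = f y * (2 * (sin (r * y))^2 / r^2)" for y
  define h where "h y = sqrt (r^2 + 2 * (sin y)^2) * (3/4 - (sin y)^2)" for y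
  define H where "H b = (LBINT y=0..b. h y)" for b
  have G0e: "G0 r = (\<lambda>w. LBINT y=0..w. g y)" by (auto simp: G0_def g_def f_def)
  have G2e: "G2 r = (\<lambda>w. LBINT y=0..w. f y)" by (auto simp: G2_def f_def)
  have cf: "continuous_on UNIV f" unfolding f_def using rpos by (intro continuous_intros) auto
  have cg: "continuous_on UNIV g" unfolding g_def using cf rpos by (intro continuous_intros) auto
  have ch: "continuous_on UNIV h" unfolding h_def by (intro continuous_intros) auto
  have dG0: "DERIV (G0 r) x :> g x" for x unfolding G0e by (rule prim_deriv[OF cg])
  have dG2: "DERIV (G2 r) x :> f x" for x unfolding G2e by (rule prim_deriv[OF cf])
  have dH: "DERIV H x :> h x" for x unfolding H_def by (rule prim_deriv[OF ch])
  have cG0: "continuous_on UNIV (G0 r)"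
    by (rule continuous_at_imp_continuous_on) (use DERIV_isCont[OF dG0] in auto)
  have cG0f: "continuous_on UNIV (\<lambda>w. G0 r w * f w)" using cG0 cf by (intro continuous_intros)
  have dG1: "DERIV (G1 r) x :> 3/2 * (G0 r x * f x)" for x
  proof -
    have "G1 r = (\<lambda>z. 3/2 * (LBINT w=0..z. G0 r w * f w))" by (auto simp: G1_def f_def)
    then show ?thesis using DERIV_cmult[OF prim_deriv[OF cG0f], of "3/2"] by simp
  qed
  have f0: "f y \<ge> 0" for y by (simp add: f_def)
  have g0: "g y \<ge> 0" for y by (simp add: g_def f_def)
  have fsq: "f y = sqrt (r^2 + 2 * (sin (r*y))^2) / r" for y
  proof -
    have "1 + 2 * (sin (r * y))^2 / r^2 = (r^2 + 2 * (sin (r*y))^2) / r^2"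
      using rpos by (simp add: field_simps)
    then show ?thesis using rpos by (simp add: f_def real_sqrt_divide)
  qed
  have key: "3/(2*r^2) * G2 r w - G0 r w = 2/r^4 * H (r*w)" for w
  proof -
    have "\<forall>x. DERIV (\<lambda>w. 3/(2*r^2) * G2 r w - G0 r w - 2/r^4 * H (r*w)) x :> 0"
    proof
      fix x
      have dHr: "DERIV (\<lambda>w. H (r*w)) x :> h (r*x) * r"
        by (rule DERIV_chain2[OF dH]) (auto intro!: derivative_eq_intros)
      have "DERIV (\<lambda>w. 3/(2*r^2) * G2 r w - G0 r w - 2/r^4 * H (r*w)) x :>
             3/(2*r^2) * f x - g x - 2/r^4 * (h (r*x) * r)"
        by (intro DERIV_diff DERIV_cmult dG2 dG0 dHr)
      moreover have "3/(2*r^2) * f x - g x - 2/r^4 * (h (r*x) * r) = 0"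
        using rpos apply (simp add: g_def h_def fsq field_simps power2_eq_square) by algebra
      ultimately show "DERIV (\<lambda>w. 3/(2*r^2) * G2 r w - G0 r w - 2/r^4 * H (r*w)) x :> 0" by simp
    qed
    from DERIV_isconst_all[OF this, of w 0] show ?thesis
      by (simp add: G0e G2e H_def zero_ereal_def[symmetric])
  qed
  have pos: "G0 r w \<ge> 0" if "w \<ge> 0" for w
  proof -
    have "G0 r 0 \<le> G0 r w"
      by (rule DERIV_nonneg_imp_increasing_open[OF that])
         (use dG0 g0 in blast, rule continuous_on_subset[OF cG0], simp)
    then show ?thesis by (simp add: G0e zero_ereal_def[symmetric])
  qed
  have pos1: "G1 r w \<ge> 0" if "w \<ge> 0" for w
  proof -
    have "G1 r 0 \<le> G1 r w"
    proof (rule DERIV_nonneg_imp_increasing_open[OF that])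
      fix x :: real assume "0 < x" "x < w"
      then have "0 \<le> 3/2 * (G0 r x * f x)" using pos[of x] f0[of x] by simp
      then show "\<exists>y. DERIV (G1 r) x :> y \<and> 0 \<le> y" using dG1 by blast
    next
      show "continuous_on {0..w} (G1 r)" by (rule DERIV_continuous_on[where D="\<lambda>x. 3/2 * (G0 r x * f x)"]) (rule DERIV_subset[OF dG1], simp)
    qed
    then show ?thesis by (simp add: G1_def zero_ereal_def[symmetric])
  qed
  have upper: "G1 r w \<le> 9/4 * (1/2) * (G2 r w)^2 / r^2" if "w \<ge> 0" for w
  proof -
    define D where "D z = 9/8/r^2 * (G2 r z)^2 - G1 r z" for z
    have dD: "DERIV D x :> 9/8/r^2 * (2 * G2 r x * f x) - 3/2 * (G0 r x * f x)" for x
    proof -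
      have dsq: "DERIV (\<lambda>z. (G2 r z)^2) x :> 2 * G2 r x * f x"
        using DERIV_power[OF dG2[of x], of 2] by (simp add: ac_simps)
      show ?thesis unfolding D_def by (intro DERIV_diff DERIV_cmult dsq dG1)
    qed
    have "D 0 \<le> D w"
    proof (rule DERIV_nonneg_imp_increasing_open[OF that])
      fix x assume x: "0 < x" "x < w"
      have "H (r*x) \<ge> 0" using hyp[rule_format, of "r*x"] x rpos by (simp add: H_def h_def)
      then have "G0 r x \<le> 3/(2*r^2) * G2 r x" using key[of x] rpos
        by (smt (verit) divide_nonneg_nonneg mult_nonneg_nonneg zero_le_power)
      then have "0 \<le> f x * (3/(2*r^2) * G2 r x - G0 r x)" using f0 by simp
      then have "0 \<le> 9/8/r^2 * (2 * G2 r x * f x) - 3/2 * (G0 r x * f x)"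
        using rpos by (simp add: field_simps)
      then show "\<exists>y. DERIV D x :> y \<and> 0 \<le> y" using dD by blast
    next
      show "continuous_on {0..w} D" by (rule DERIV_continuous_on) (rule DERIV_subset[OF dD], simp)
    qed
    then show ?thesis by (simp add: D_def G1_def G2_def zero_ereal_def[symmetric] field_simps)
  qed
  show ?thesis
  proof (cases "z \<ge> 0")
    case True then show ?thesis using upper pos1 by simp
  next
    case False
    have fe: "f (-x) = f x" for x by (simp add: f_def)
    have ge: "g (-x) = g x" for x by (simp add: g_def f_def)
    have o0: "G0 r (-x) = - G0 r x" for x by (rule odd_prim[OF dG0 ge]) (simp add: G0e zero_ereal_def[symmetric])
    have o2: "G2 r (-x) = - G2 r x" for x by (rule odd_prim[OF dG2 fe]) (simp add: G2e zero_ereal_def[symmetric])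
    have e1: "G1 r (-x) = G1 r x" for x by (rule even_prim[OF dG1]) (simp add: o0 fe)
    have "G1 r z = G1 r (-z)" using e1[of "-z"] by simp
    moreover have "(G2 r z)^2 = (G2 r (-z))^2" using o2[of z] by simp
    ultimately show ?thesis using upper[of "-z"] pos1[of "-z"] False by simp
  qed
qed

theorem corollary1:
  fixes r0 :: real
  assumes "r0 > 0"
    and "\<forall>r. 0 \<le> r \<and> r \<le> r0 \<longrightarrow> (\<forall>\<beta>\<ge>0.
           (LBINT y=0..\<beta>. sqrt (r^2 + 2 * (sin y)^2) * (3/4 - (sin y)^2)) \<ge> 0)"
  shows "\<forall>r z. 0 < r \<and> r \<le> r0 \<longrightarrow>
           \<bar>G1 r z\<bar> \<le> 9/4 * (1/2) * (G2 r z)^2 / r^2"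
  using assms(2) main by auto

end
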